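(* Let $X$ be a semigroup and $S$ be one of the semigroups $\beta(X),\lambda(X),\varphi(X),N_2(X),\upsilon(X)$. If $S$ is regular, then for every subsemigroup $Z\subset X$ whose complement $X\setminus Z$ is an ideal in $X$, the semigroup $S\cap\upsilon(Z)$ is regular.
   Context: An upfamily on a set $X$ is a family of nonempty subsets of $X$ closed under taking supersets in $X$; $\upsilon(X)$ is the set of all upfamilies. $N_2(X)$, $\lambda(X)$, $\varphi(X)$, $\beta(X)$ are the sets of linked upfamilies (any two members intersect), maximal linked upfamilies, filters, and ultrafilters on $X$. The operation is $\mathcal A*\mathcal B=\big\langle \bigcup_{a\in A} a*B_a : A\in\mathcal A,\ \{B_a\}_{a\in A}\subset\mathcal B\big\rangle$, where $\langle\mathcal C\rangle=\{A\subset X:\exists C\in\mathcal C,\ C\subset A\}$; all these sets are subsemigroups of $\upsilon(X)$. For $Z\subset X$, $\upsilon(Z)$ is identified with the subset of $\upsilon(X)$ consisting of the upfamilies $\{A\subset X: A\cap Z\in\mathcal F\}$, $\mathcal F\in\upsilon(Z)$. A semigroup $S$ is regular if $x\in xSx$ for every $x\in S$. A nonempty $I\subset X$ is an ideal if $XI\cup IX\subset I$. *)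

theory Defs
  imports Main
begin

text \<open>The semigroup X is the whole carrier of a type of class semigroup_mult.\<close>

definition upfamily :: "'a set set \<Rightarrow> bool" where
  "upfamily \<A> \<longleftrightarrow> (\<forall>A\<in>\<A>. A \<noteq> {}) \<and> (\<forall>A\<in>\<A>. \<forall>B. A \<subseteq> B \<longrightarrow> B \<in> \<A>)"

definition ups :: "'a set set set" where
  "ups = {\<A>. upfamily \<A>}"

definition linked :: "'a set set \<Rightarrow> bool" where
  "linked \<A> \<longleftrightarrow> (\<forall>A\<in>\<A>. \<forall>B\<in>\<A>. A \<inter> B \<noteq> {})"

definition N2 :: "'a set set set" where
  "N2 = {\<A>. upfamily \<A> \<and> linked \<A>}"

definition lam :: "'a set set set" where
  "lam = {\<A>. \<A> \<in> N2 \<and> (\<forall>\<B>\<in>N2. \<A> \<subseteq> \<B> \<longrightarrow> \<B> = \<A>)}"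

definition is_filter_up :: "'a set set \<Rightarrow> bool" where
  "is_filter_up \<A> \<longleftrightarrow> upfamily \<A> \<and> (\<forall>A\<in>\<A>. \<forall>B\<in>\<A>. A \<inter> B \<in> \<A>)"

definition phi :: "'a set set set" where
  "phi = {\<A>. is_filter_up \<A>}"

definition bet :: "'a set set set" where
  "bet = {\<A>. \<A> \<in> phi \<and> (\<forall>\<B>\<in>phi. \<A> \<subseteq> \<B> \<longrightarrow> \<B> = \<A>)}"

definition up_mult :: "'a::semigroup_mult set set \<Rightarrow> 'a set set \<Rightarrow> 'a set set" where
  "up_mult \<A> \<B> = {C. \<exists>A\<in>\<A>. \<exists>f. (\<forall>a\<in>A. f a \<in> \<B>) \<and>
       (\<Union>a\<in>A. (\<lambda>b. a * b) ` f a) \<subseteq> C}"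

definition regular_sub :: "'a::semigroup_mult set set set \<Rightarrow> bool" where
  "regular_sub S \<longleftrightarrow> (\<forall>x\<in>S. \<exists>y\<in>S. x = up_mult (up_mult x y) x)"

text \<open>Upfamilies on a subset Z, and their identification with upfamilies on X.\<close>
definition upfamily_on :: "'a set \<Rightarrow> 'a set set \<Rightarrow> bool" where
  "upfamily_on Z \<F> \<longleftrightarrow> \<F> \<subseteq> Pow Z \<and> (\<forall>A\<in>\<F>. A \<noteq> {}) \<and>
     (\<forall>A\<in>\<F>. \<forall>B. A \<subseteq> B \<and> B \<subseteq> Z \<longrightarrow> B \<in> \<F>)"

definition ups_sub :: "'a set \<Rightarrow> 'a set set set" where
  "ups_sub Z = {\<A>. \<exists>\<F>. upfamily_on Z \<F> \<and> \<A> = {A. A \<inter> Z \<in> \<F>}}"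

definition is_ideal :: "'a::semigroup_mult set \<Rightarrow> bool" where
  "is_ideal I \<longleftrightarrow> I \<noteq> {} \<and> (\<forall>x. \<forall>i\<in>I. x * i \<in> I \<and> i * x \<in> I)"

definition subsemigroup :: "'a::semigroup_mult set \<Rightarrow> bool" where
  "subsemigroup Z \<longleftrightarrow> Z \<noteq> {} \<and> (\<forall>x\<in>Z. \<forall>y\<in>Z. x * y \<in> Z)"

end

theory Submission imports Defs begin
lemma ups_sub_iff:
  "H \<in> ups_sub Z \<longleftrightarrow> upfamily H \<and> (\<forall>A. A \<in> H \<longleftrightarrow> A \<inter> Z \<in> H)"
proof
  assume "H \<in> ups_sub Z"
  then obtain F where F: "upfamily_on Z F" "H = {A. A \<inter> Z \<in> F}"
    unfolding ups_sub_def by blast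
  have "upfamily H"
    unfolding upfamily_def
  proof (intro conjI ballI allI impI)
    fix A assume "A \<in> H" then show "A \<noteq> {}" using F unfolding upfamily_on_def by auto
  next
    fix A B assume "A \<in> H" "A \<subseteq> B"
    then have "A \<inter> Z \<in> F" "A \<inter> Z \<subseteq> B \<inter> Z" "B \<inter> Z \<subseteq> Z" using F by auto
    then show "B \<in> H" using F(2) F(1)[unfolded upfamily_on_def] by simp
  qed
  moreover have "\<forall>A. A \<in> H \<longleftrightarrow> A \<inter> Z \<in> H" using F by (simp add: Int_assoc)
  ultimately show "upfamily H \<and> (\<forall>A. A \<in> H \<longleftrightarrow> A \<inter> Z \<in> H)" by blast
next
  assume a: "upfamily H \<and> (\<forall>A. A \<in> H \<longleftrightarrow> A \<inter> Z \<in> H)"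
  have "upfamily_on Z (H \<inter> Pow Z)"
    unfolding upfamily_on_def
  proof (intro conjI ballI allI impI)
    show "H \<inter> Pow Z \<subseteq> Pow Z" by simp
    fix A assume "A \<in> H \<inter> Pow Z" then show "A \<noteq> {}" using a unfolding upfamily_def by simp
  next
    fix A B assume "A \<in> H \<inter> Pow Z" "A \<subseteq> B \<and> B \<subseteq> Z"
    then show "B \<in> H \<inter> Pow Z" using a unfolding upfamily_def by blast
  qed
  moreover have "H = {A. A \<inter> Z \<in> H \<inter> Pow Z}" using a by auto
  ultimately show "H \<in> ups_sub Z" unfolding ups_sub_def by blast
qed
lemma up_mult_iff: "C \<in> up_mult x y \<longleftrightarrow> (\<exists>A\<in>x. \<exists>f. (\<forall>a\<in>A. f a \<in> y) \<and> (\<forall>a\<in>A. \<forall>b\<in>f a. a * b \<in> C))"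
  unfolding up_mult_def by (simp add: UN_subset_iff image_subset_iff)
lemma mono_mult: "x \<subseteq> x' \<Longrightarrow> y \<subseteq> y' \<Longrightarrow> up_mult x y \<subseteq> up_mult x' y'"
proof
  fix C assume xy: "x \<subseteq> x'" "y \<subseteq> y'" and C: "C \<in> up_mult x y"
  from C obtain A f where h: "A \<in> x" "\<forall>a\<in>A. f a \<in> y" "\<forall>a\<in>A. \<forall>b\<in>f a. a * b \<in> C"
    unfolding up_mult_iff by blast
  have "A \<in> x'" "\<forall>a\<in>A. f a \<in> y'" using h xy by auto
  then show "C \<in> up_mult x' y'" using h(3) unfolding up_mult_iff by blast
qed

lemma up_multI: "A \<in> x \<Longrightarrow> \<forall>a\<in>A. f a \<in> y \<Longrightarrow> \<forall>a\<in>A. \<forall>b\<in>f a. a * b \<in> C \<Longrightarrow> C \<in> up_mult x y"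
  unfolding up_mult_iff by blast

lemma up_multD: "C \<in> up_mult x y \<Longrightarrow> \<exists>A\<in>x. \<exists>f. (\<forall>a\<in>A. f a \<in> y) \<and> (\<forall>a\<in>A. \<forall>b\<in>f a. a * b \<in> C)"
  by (rule up_mult_iff[THEN iffD1])

lemma key:
  assumes xZ: "x \<in> ups_sub Z" and id: "is_ideal (- Z)" and yu: "upfamily y"
    and eq: "x = up_mult (up_mult x y) x"
  shows "x = up_mult (up_mult x {A. A \<inter> Z \<in> y}) x"
proof
  have xx: "upfamily x \<and> (\<forall>A. A \<in> x \<longleftrightarrow> A \<inter> Z \<in> x)" using xZ by (rule ups_sub_iff[THEN iffD1])
  have xo: "\<forall>A. A \<in> x \<longleftrightarrow> A \<inter> Z \<in> x" using xx by (rule conjunct2)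
  have xu: "upfamily x" using xx by (rule conjunct1)
  have xne: "\<And>A. A \<in> x \<Longrightarrow> A \<noteq> {}" using xu unfolding upfamily_def by blast
  have idI: "\<And>u i. i \<in> - Z \<Longrightarrow> u * i \<in> - Z \<and> i * u \<in> - Z" using id unfolding is_ideal_def by blast
  have eqs: "up_mult (up_mult x y) x = x" using eq by (rule sym)
  show "x \<subseteq> up_mult (up_mult x {A. A \<inter> Z \<in> y}) x"
  proof
    fix D assume "D \<in> x"
    then have "D \<inter> Z \<in> x" using xo by blast
    then have DZ: "D \<inter> Z \<in> up_mult (up_mult x y) x" unfolding eqs .
    obtain E g where E: "E \<in> up_mult x y" "\<forall>e\<in>E. g e \<in> x"
        "\<forall>e\<in>E. \<forall>c\<in>g e. e * c \<in> D \<inter> Z"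
      using up_multD[OF DZ] by blast
    from E(1) obtain A f where A: "A \<in> x" "\<forall>a\<in>A. f a \<in> y" "\<forall>a\<in>A. \<forall>b\<in>f a. a * b \<in> E"
      using up_multD[OF E(1)] by blast
    have sub: "f a \<subseteq> Z" if "a \<in> A" for a
    proof
      fix b assume b: "b \<in> f a"
      have ab: "a * b \<in> E" using bspec[OF bspec[OF A(3) that] b] .
      have "g (a * b) \<in> x" using bspec[OF E(2) ab] .
      then have "g (a * b) \<noteq> {}" by (rule xne)
      then obtain c where c: "c \<in> g (a * b)" by blast
      have abc: "a * b * c \<in> D \<inter> Z" using bspec[OF bspec[OF E(3) ab] c] .
      show "b \<in> Z"
      proof (rule ccontr)
        assume "b \<notin> Z"
        then have "b \<in> - Z" by simp
        then have "a * b \<in> - Z" using idI[of b a] by blast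
        then have "a * b * c \<in> - Z" using idI[of "a * b" c] by blast
        then show False using abc by blast
      qed
    qed
    have "\<forall>a\<in>A. f a \<in> {A. A \<inter> Z \<in> y}" using sub A(2) by (simp add: Int_absorb2)
    then have E2: "E \<in> up_mult x {A. A \<inter> Z \<in> y}" using A(1,3) by (intro up_multI[of A x f _ E])
    have "\<forall>e\<in>E. \<forall>c\<in>g e. e * c \<in> D" using E(3) by blast
    then show "D \<in> up_mult (up_mult x {A. A \<inter> Z \<in> y}) x" using E2 E(2) by (intro up_multI[of E _ g x D])
  qed
next
  have yup: "\<forall>A\<in>y. \<forall>B. A \<subseteq> B \<longrightarrow> B \<in> y" using yu unfolding upfamily_def by (rule conjunct2)
  have "{A. A \<inter> Z \<in> y} \<subseteq> y"
  proof
    fix A assume "A \<in> {A. A \<inter> Z \<in> y}"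
    then have "A \<inter> Z \<in> y" by simp
    then show "A \<in> y" using yup by blast
  qed
  then have "up_mult (up_mult x {A. A \<inter> Z \<in> y}) x \<subseteq> up_mult (up_mult x y) x"
    by (intro mono_mult) auto
  then show "up_mult (up_mult x {A. A \<inter> Z \<in> y}) x \<subseteq> x" using eq[symmetric] by (rule ord_le_eq_trans)
qed

lemma mult_up: assumes "upfamily x" "upfamily y" shows "upfamily (up_mult x y)"
  unfolding upfamily_def
proof (intro conjI ballI allI impI)
  fix C assume "C \<in> up_mult x y"
  then obtain A f where A: "A \<in> x" "\<forall>a\<in>A. f a \<in> y" "\<forall>a\<in>A. \<forall>b\<in>f a. a * b \<in> C"
    unfolding up_mult_iff by blast
  have "A \<noteq> {}" using A(1) assms(1) unfolding upfamily_def by blast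
  then obtain a where a: "a \<in> A" by blast
  have "f a \<noteq> {}" using A(2) a assms(2) unfolding upfamily_def by blast
  then obtain b where "b \<in> f a" by blast
  then have "a * b \<in> C" using A(3) a by blast
  then show "C \<noteq> {}" by blast
next
  fix C D assume "C \<in> up_mult x y" "C \<subseteq> D"
  then show "D \<in> up_mult x y" unfolding up_mult_iff by blast
qed

lemma mult_linked:
  assumes "linked x" "linked y" shows "linked (up_mult x y)"
  unfolding linked_def
proof (intro ballI)
  fix C1 C2 assume "C1 \<in> up_mult x y" "C2 \<in> up_mult x y"
  then obtain A1 f1 A2 f2 where A: "A1 \<in> x" "\<forall>a\<in>A1. f1 a \<in> y" "\<forall>a\<in>A1. \<forall>b\<in>f1 a. a * b \<in> C1"
    "A2 \<in> x" "\<forall>a\<in>A2. f2 a \<in> y" "\<forall>a\<in>A2. \<forall>b\<in>f2 a. a * b \<in> C2"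
    unfolding up_mult_iff by blast
  have "A1 \<inter> A2 \<noteq> {}" using assms(1) A(1,4) unfolding linked_def by blast
  then obtain a where a: "a \<in> A1" "a \<in> A2" by blast
  have "f1 a \<inter> f2 a \<noteq> {}" using assms(2) A(2,5) a unfolding linked_def by blast
  then obtain b where "b \<in> f1 a" "b \<in> f2 a" by blast
  then have "a * b \<in> C1 \<inter> C2" using A(3,6) a by blast
  then show "C1 \<inter> C2 \<noteq> {}" by blast
qed

lemma UNIV_up: "upfamily {UNIV}"
  unfolding upfamily_def by auto

lemma mult_ne1: assumes "up_mult x y \<noteq> {}" shows "x \<noteq> {}"
proof -
  obtain C where "C \<in> up_mult x y" using assms by blast
  then show ?thesis unfolding up_mult_iff by blast
qed

lemma mult_ne2: assumes "up_mult x y \<noteq> {}" "\<forall>A\<in>x. A \<noteq> {}" shows "y \<noteq> {}"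
proof -
  obtain C where "C \<in> up_mult x y" using assms by blast
  then obtain A f where "A \<in> x" "\<forall>a\<in>A. f a \<in> y" unfolding up_mult_iff by blast
  moreover then have "A \<noteq> {}" using assms(2) by blast
  ultimately show ?thesis by blast
qed


lemma bet_up: "G \<in> bet \<Longrightarrow> upfamily G" unfolding bet_def phi_def is_filter_up_def by blast
lemma lam_up: "G \<in> lam \<Longrightarrow> upfamily G" unfolding lam_def N2_def by blast
lemma phi_up: "G \<in> phi \<Longrightarrow> upfamily G" unfolding phi_def is_filter_up_def by blast
lemma N2_up: "G \<in> N2 \<Longrightarrow> upfamily G" unfolding N2_def by blast
lemma ups_up: "G \<in> ups \<Longrightarrow> upfamily G" unfolding ups_def by blast

lemma Union_up: assumes "C \<noteq> {}" "\<forall>G\<in>C. upfamily G" shows "upfamily (\<Union>C)"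
  unfolding upfamily_def
proof (intro conjI ballI allI impI)
  fix A assume "A \<in> \<Union>C"
  then obtain G where "G \<in> C" "A \<in> G" by blast
  then show "A \<noteq> {}" using assms(2) unfolding upfamily_def by blast
next
  fix A B assume "A \<in> \<Union>C" "A \<subseteq> B"
  then obtain G where G: "G \<in> C" "A \<in> G" by blast
  then have "B \<in> G" using assms(2) \<open>A \<subseteq> B\<close> unfolding upfamily_def by blast
  then show "B \<in> \<Union>C" using G by blast
qed

lemma Union_linked: assumes "\<forall>A\<in>C. \<forall>B\<in>C. A \<subseteq> B \<or> B \<subseteq> A" "\<forall>G\<in>C. linked G" shows "linked (\<Union>C)"
  unfolding linked_def
proof (intro ballI)
  fix A B assume "A \<in> \<Union>C" "B \<in> \<Union>C"
  then obtain G1 G2 where G: "G1 \<in> C" "G2 \<in> C" "A \<in> G1" "B \<in> G2" by blast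
  have l1: "linked G1" "linked G2" using G assms(2) by auto
  from assms(1) G(1,2) have "G1 \<subseteq> G2 \<or> G2 \<subseteq> G1" by blast
  then show "A \<inter> B \<noteq> {}"
  proof
    assume "G1 \<subseteq> G2" then have "A \<in> G2" using G by blast
    then show ?thesis using l1(2) G(4) unfolding linked_def by blast
  next
    assume "G2 \<subseteq> G1" then have "B \<in> G1" using G by blast
    then show ?thesis using l1(1) G(3) unfolding linked_def by blast
  qed
qed

lemma lam_ext:
  assumes y2N: "y2 \<in> N2" and y2o: "\<forall>A. A \<in> y2 \<longleftrightarrow> A \<inter> Z \<in> y2" and Z2: "Z \<in> y2"
  shows "\<exists>M. M \<in> lam \<and> M \<in> ups_sub Z \<and> y2 \<subseteq> M"
proof -
  define P where "P = {G. G \<in> N2 \<and> (\<forall>A. A \<in> G \<longleftrightarrow> A \<inter> Z \<in> G) \<and> y2 \<subseteq> G}"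
  have y2P: "y2 \<in> P" unfolding P_def using y2N y2o by blast
  have "\<forall>C\<in>chains P. \<exists>U\<in>P. \<forall>X\<in>C. X \<subseteq> U"
  proof
    fix C assume C: "C \<in> chains P"
    show "\<exists>U\<in>P. \<forall>X\<in>C. X \<subseteq> U"
    proof (cases "C = {}")
      case True then show ?thesis using y2P by blast
    next
      case False
      have CP: "C \<subseteq> P" and ch: "\<forall>A\<in>C. \<forall>B\<in>C. A \<subseteq> B \<or> B \<subseteq> A"
        using C unfolding chains_def chain_subset_def by auto
      have CN: "\<forall>G\<in>C. G \<in> N2" using CP unfolding P_def by blast
      have "upfamily (\<Union>C)" using Union_up[OF False] CN N2_up by blast
      moreover have "linked (\<Union>C)" using Union_linked[OF ch] CN unfolding N2_def by blast
      ultimately have "\<Union>C \<in> N2" unfolding N2_def by blast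
      moreover have "\<forall>A. A \<in> \<Union>C \<longleftrightarrow> A \<inter> Z \<in> \<Union>C"
      proof
        fix A
        have "\<forall>G\<in>C. (A \<in> G \<longleftrightarrow> A \<inter> Z \<in> G)" using CP unfolding P_def by blast
        then show "A \<in> \<Union>C \<longleftrightarrow> A \<inter> Z \<in> \<Union>C" by blast
      qed
      moreover have "y2 \<subseteq> \<Union>C" using CP False unfolding P_def by blast
      ultimately have "\<Union>C \<in> P" unfolding P_def by blast
      then show ?thesis by blast
    qed
  qed
  from Zorn_Lemma2[OF this] obtain M where MP: "M \<in> P" and Mmax: "\<forall>X\<in>P. M \<subseteq> X \<longrightarrow> X = M"
    by blast
  have MN: "M \<in> N2" and Mo: "\<forall>A. A \<in> M \<longleftrightarrow> A \<inter> Z \<in> M" and yM: "y2 \<subseteq> M"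
    using MP unfolding P_def by auto
  have Mu: "upfamily M" and Ml: "linked M" using MN unfolding N2_def by auto
  have Mup: "\<forall>A\<in>M. \<forall>B. A \<subseteq> B \<longrightarrow> B \<in> M" using Mu unfolding upfamily_def by (rule conjunct2)
  have ZM: "Z \<in> M" using Z2 yM by blast
  have "M \<in> lam" unfolding lam_def
  proof (intro CollectI conjI ballI impI)
    show "M \<in> N2" by (rule MN)
    fix G assume GN: "G \<in> N2" and MG: "M \<subseteq> G"
    have lG: "linked G" using GN unfolding N2_def by blast
    have "G \<subseteq> M"
    proof
      fix A assume AG: "A \<in> G"
      define H where "H = M \<union> {B. A \<inter> Z \<subseteq> B}"
      have ZG: "Z \<in> G" using ZM MG by blast
      have AZ: "A \<inter> Z \<noteq> {}" using lG AG ZG unfolding linked_def by blast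
      have l1: "A \<inter> Z \<inter> D \<noteq> {}" if "D \<in> M" for D
      proof -
        have "D \<inter> Z \<in> M" using Mo that by blast
        then have "D \<inter> Z \<in> G" using MG by blast
        then have "A \<inter> (D \<inter> Z) \<noteq> {}" using lG AG unfolding linked_def by blast
        then show ?thesis by blast
      qed
      have Hu: "upfamily H" unfolding upfamily_def
      proof (intro conjI ballI allI impI)
        fix B assume "B \<in> H" then show "B \<noteq> {}"
          using Mu AZ unfolding H_def upfamily_def by blast
      next
        fix B B' assume "B \<in> H" "B \<subseteq> B'" then show "B' \<in> H"
          using Mup unfolding H_def by blast
      qed
      have Hl: "linked H" unfolding linked_def
      proof (intro ballI)
        fix B1 B2 assume B: "B1 \<in> H" "B2 \<in> H"
        show "B1 \<inter> B2 \<noteq> {}"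
        proof (cases "B1 \<in> M")
          case True
          show ?thesis
          proof (cases "B2 \<in> M")
            case True then show ?thesis using \<open>B1 \<in> M\<close> Ml unfolding linked_def by blast
          next
            case False then have "A \<inter> Z \<subseteq> B2" using B unfolding H_def by blast
            then show ?thesis using l1[OF \<open>B1 \<in> M\<close>] by blast
          qed
        next
          case False then have b1: "A \<inter> Z \<subseteq> B1" using B unfolding H_def by blast
          show ?thesis
          proof (cases "B2 \<in> M")
            case True then show ?thesis using l1[OF True] b1 by blast
          next
            case False then have "A \<inter> Z \<subseteq> B2" using B unfolding H_def by blast
            then show ?thesis using b1 AZ by blast
          qed
        qed
      qed
      have Ho: "\<forall>B. B \<in> H \<longleftrightarrow> B \<inter> Z \<in> H" using Mo unfolding H_def by blast
      have "H \<in> P" unfolding P_def N2_def using Hu Hl Ho yM unfolding H_def by blast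
      moreover have "M \<subseteq> H" unfolding H_def by blast
      ultimately have "H = M" using Mmax by blast
      then have "A \<inter> Z \<in> M" unfolding H_def by blast
      then show "A \<in> M" using Mo by blast
    qed
    then show "G = M" using MG by blast
  qed
  moreover have "M \<in> ups_sub Z" using Mu Mo by (intro ups_sub_iff[THEN iffD2]) blast
  ultimately show ?thesis using yM by blast
qed

theorem corollary3p4:
  fixes S :: "'a::semigroup_mult set set set" and Z :: "'a set"
  assumes "S \<in> {bet, lam, phi, N2, ups}"
    and "regular_sub S"
    and "subsemigroup Z"
    and "is_ideal (- Z)"
  shows "regular_sub (S \<inter> ups_sub Z)"
  unfolding regular_sub_def
proof (intro ballI)
  fix x assume "x \<in> S \<inter> ups_sub Z"
  then have xS: "x \<in> S" and xZ: "x \<in> ups_sub Z" by auto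
  have "\<exists>y\<in>S. x = up_mult (up_mult x y) x" using assms(2) xS unfolding regular_sub_def by blast
  then obtain y where yS: "y \<in> S" and eq: "x = up_mult (up_mult x y) x" by blast
  from assms(1) consider "S = bet" | "S = lam" | "S = phi" | "S = N2" | "S = ups" by blast
  note cs = this
  have upS: "upfamily G" if "G \<in> S" for G
    using cs that bet_up lam_up phi_up N2_up ups_up by metis
  have xx: "upfamily x \<and> (\<forall>A. A \<in> x \<longleftrightarrow> A \<inter> Z \<in> x)" using xZ by (rule ups_sub_iff[THEN iffD1])
  have xu: "upfamily x" using xx by (rule conjunct1)
  have xne: "\<forall>A\<in>x. A \<noteq> {}" using xu unfolding upfamily_def by (rule conjunct1)
  have yu: "upfamily y" using yS by (rule upS)
  have yne: "\<forall>A\<in>y. A \<noteq> {}" using yu unfolding upfamily_def by (rule conjunct1)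
  have yup: "\<forall>A\<in>y. \<forall>B. A \<subseteq> B \<longrightarrow> B \<in> y" using yu unfolding upfamily_def by (rule conjunct2)
  define y2 where "y2 = {A. A \<inter> Z \<in> y}"
  have eq2: "x = up_mult (up_mult x y2) x"
    unfolding y2_def using key[OF xZ assms(4) yu eq] .
  have y2up: "upfamily y2" unfolding upfamily_def
  proof (intro conjI ballI allI impI)
    fix A assume "A \<in> y2" then have "A \<inter> Z \<in> y" unfolding y2_def by simp
    then have "A \<inter> Z \<noteq> {}" using yne by blast
    then show "A \<noteq> {}" by blast
  next
    fix A B assume "A \<in> y2" "A \<subseteq> B"
    then have "A \<inter> Z \<in> y" "A \<inter> Z \<subseteq> B \<inter> Z" unfolding y2_def by auto
    then have "B \<inter> Z \<in> y" using yup by blast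
    then show "B \<in> y2" unfolding y2_def by simp
  qed
  have y2o: "\<forall>A. A \<in> y2 \<longleftrightarrow> A \<inter> Z \<in> y2" unfolding y2_def by (simp add: Int_assoc)
  have y2Z: "y2 \<in> ups_sub Z" using y2up y2o by (intro ups_sub_iff[THEN iffD2]) blast
  have y2sub: "y2 \<subseteq> y"
  proof
    fix A assume "A \<in> y2" then have "A \<inter> Z \<in> y" unfolding y2_def by simp
    then show "A \<in> y" using yup by blast
  qed
  have Zy: "Z \<in> y" if "x \<noteq> {}"
  proof -
    have "up_mult (up_mult x y2) x \<noteq> {}"
    proof
      assume "up_mult (up_mult x y2) x = {}"
      with eq2 have "x = {}" by (rule trans)
      with that show False by blast
    qed
    then have "up_mult x y2 \<noteq> {}" by (rule mult_ne1)
    then have "y2 \<noteq> {}" using xne by (rule mult_ne2)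
    then obtain A where "A \<inter> Z \<in> y" unfolding y2_def by blast
    then show "Z \<in> y" using yup by blast
  qed
  from cs show "\<exists>y\<in>S \<inter> ups_sub Z. x = up_mult (up_mult x y) x"
  proof cases
    case 5
    have "y2 \<in> ups" unfolding ups_def using y2up by blast
    then show ?thesis using 5 y2Z eq2 by blast
  next
    case 4
    then have "linked y" using yS unfolding N2_def by blast
    then have "linked y2" using y2sub unfolding linked_def by blast
    then have "y2 \<in> N2" unfolding N2_def using y2up by blast
    then show ?thesis using 4 y2Z eq2 by blast
  next
    case 3
    then have fy: "is_filter_up y" using yS unfolding phi_def by blast
    have "\<forall>A\<in>y2. \<forall>B\<in>y2. A \<inter> B \<in> y2"
    proof (intro ballI)
      fix A B assume "A \<in> y2" "B \<in> y2"
      then have "A \<inter> Z \<in> y" "B \<inter> Z \<in> y" unfolding y2_def by auto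
      then have "(A \<inter> Z) \<inter> (B \<inter> Z) \<in> y" using fy unfolding is_filter_up_def by blast
      moreover have "(A \<inter> Z) \<inter> (B \<inter> Z) = (A \<inter> B) \<inter> Z" by blast
      ultimately show "A \<inter> B \<in> y2" unfolding y2_def by simp
    qed
    then have "y2 \<in> phi" unfolding phi_def is_filter_up_def using y2up by blast
    then show ?thesis using 3 y2Z eq2 by blast
  next
    case 1
    have "{UNIV} \<in> phi" unfolding phi_def is_filter_up_def using UNIV_up by auto
    then have "x \<noteq> {}" using xS 1 unfolding bet_def by blast
    then have "Z \<in> y" by (rule Zy)
    have fy: "is_filter_up y" using yS 1 unfolding bet_def phi_def by blast
    have "y \<subseteq> y2"
    proof
      fix A assume "A \<in> y"
      then have "A \<inter> Z \<in> y" using fy \<open>Z \<in> y\<close> unfolding is_filter_up_def by blast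
      then show "A \<in> y2" unfolding y2_def by simp
    qed
    then have "y2 = y" using y2sub by blast
    then have "y \<in> ups_sub Z" using y2Z by simp
    then show ?thesis using yS eq by blast
  next
    case 2
    have "{UNIV} \<in> N2" unfolding N2_def linked_def using UNIV_up by auto
    then have "x \<noteq> {}" using xS 2 unfolding lam_def by blast
    then have "Z \<in> y" by (rule Zy)
    then have Z2: "Z \<in> y2" unfolding y2_def by simp
    have ly: "linked y" using yS 2 unfolding lam_def N2_def by blast
    have ly2: "linked y2" using ly y2sub unfolding linked_def by blast
    have y2N: "y2 \<in> N2" unfolding N2_def using y2up ly2 by blast
    obtain M where Mlam: "M \<in> lam" and MZ: "M \<in> ups_sub Z" and yM: "y2 \<subseteq> M"
      using lam_ext[OF y2N y2o Z2] by blast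
    have MN: "M \<in> N2" using Mlam unfolding lam_def by blast
    have xN: "x \<in> N2" and xmax: "\<forall>B\<in>N2. x \<subseteq> B \<longrightarrow> B = x" using xS 2 unfolding lam_def by auto
    have hM: "up_mult (up_mult x y2) x \<subseteq> up_mult (up_mult x M) x"
      using yM by (intro mono_mult) auto
    have sub: "x \<subseteq> up_mult (up_mult x M) x" using eq2 hM by (rule ord_eq_le_trans)
    have xu2: "upfamily x" "linked x" using xN unfolding N2_def by auto
    have Mu2: "upfamily M" "linked M" using MN unfolding N2_def by auto
    have "upfamily (up_mult (up_mult x M) x)" using mult_up[OF mult_up[OF xu2(1) Mu2(1)] xu2(1)] .
    moreover have "linked (up_mult (up_mult x M) x)" using mult_linked[OF mult_linked[OF xu2(2) Mu2(2)] xu2(2)] .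
    ultimately have "up_mult (up_mult x M) x \<in> N2" unfolding N2_def by blast
    then have "up_mult (up_mult x M) x = x" using xmax sub by blast
    then show ?thesis using Mlam MZ 2 by auto
  qed
qed

end
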